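(* Let $c\in K$ and let $P\in W[x]$ be nonzero, written (uniquely) as \[P=\sum_{i=r}^{N}(x-c)^i p_i(\vartheta_c),\qquad p_i\in K[t],\ p_r\neq 0,\ r,N\in\mathbb Z,\] and set $p_j=0$ for $j>N$. Let $s$ be a positive integer. Then $(x-c)^{-s}P$ (product in $W(x)$) lies in $W[x]$ if and only if either $r-s\ge 0$, or, with $m=s-r>0$, \[p_{r+k}(j)=0\quad\text{for all }0\le k\le m-1\text{ and all }0\le j\le m-1-k,\] i.e. $p_r(0)=\dots=p_r(m-1)=0$, $p_{r+1}(0)=\dots=p_{r+1}(m-2)=0$, $\dots$, $p_{r+m-1}(0)=0$.
   Context: $K$ is an algebraically closed field of characteristic $0$. $W[x]$ is the Weyl algebra, the $K$-algebra generated by $x$ and $\partial=d/dx$ with $[x,\partial]=-1$; $W(x)=K(x)[\partial]$. $\vartheta_c=(x-c)\partial$. *)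

theory Defs
  imports "HOL-Computational_Algebra.Computational_Algebra"
begin

type_synonym 'a ratfun = "'a poly fract"

text \<open>Elements of W(x) = K(x)[d]: an element sum_j g_j(x) d^j (coefficients written
  on the left) is represented by the polynomial in d with coefficients g_j.
  Addition is that of polynomials; multiplication is wmult below.\<close>
type_synonym 'a wop = "'a ratfun poly"

definition rderiv :: "'a::{field_char_0,field_gcd} ratfun \<Rightarrow> 'a ratfun" where
  "rderiv f = (case quot_of_fract f of (p, q) \<Rightarrow>
      Fract (pderiv p * q - p * pderiv q) (q * q))"

text \<open>Product in W(x): (a d^i)(b d^j) = sum_k (i choose k) a b^(k) d^(i-k+j).\<close>
definition wmult :: "'a::{field_char_0,field_gcd} wop \<Rightarrow> 'a wop \<Rightarrow> 'a wop" where
  "wmult A B = (\<Sum>i\<le>degree A. \<Sum>k\<le>i. \<Sum>j\<le>degree B.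
      monom (coeff A i * of_nat (i choose k) * (rderiv ^^ k) (coeff B j)) (i - k + j))"

definition wpow :: "'a::{field_char_0,field_gcd} wop \<Rightarrow> nat \<Rightarrow> 'a wop" where
  "wpow A n = (wmult A ^^ n) 1"

definition xc :: "'a::{field_char_0,field_gcd} \<Rightarrow> 'a ratfun" where
  "xc c = Fract [:-c, 1:] 1"

definition wd :: "'a::{field_char_0,field_gcd} wop" where
  "wd = monom 1 1"

definition theta :: "'a::{field_char_0,field_gcd} \<Rightarrow> 'a wop" where
  "theta c = wmult [:xc c:] wd"

definition xc_powi :: "'a::{field_char_0,field_gcd} \<Rightarrow> int \<Rightarrow> 'a wop" where
  "xc_powi c i = [: xc c powi i :]"

definition wpoly_eval :: "'a::{field_char_0,field_gcd} poly \<Rightarrow> 'a wop \<Rightarrow> 'a wop" where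
  "wpoly_eval p A = (\<Sum>k\<le>degree p. wmult [:Fract [:coeff p k:] 1:] (wpow A k))"

definition in_Wx :: "'a::{field_char_0,field_gcd} wop \<Rightarrow> bool" where
  "in_Wx A \<longleftrightarrow> (\<forall>j. coeff A j \<in> range (\<lambda>q. Fract q 1))"

end

theory Submission
  imports Defs
begin

abbreviation T :: "'a::idom poly \<Rightarrow> 'a poly fract" where "T \<equiv> to_fract"

lemma Fract1: "Fract q 1 = to_fract q" by (simp add: to_fract_def)

lemma to_fract_sum: "to_fract (sum f A) = (\<Sum>x\<in>A. to_fract (f x))"
  by (induct A rule: infinite_finite_induct) auto

lemma to_fract_power: "to_fract (x ^ n) = to_fract x ^ n"
  by (induct n) auto

abbreviation Yp :: "'a::{field_char_0,field_gcd} \<Rightarrow> 'a poly" where "Yp c \<equiv> [:-c, 1:]"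

lemma xc_T: "xc c = T [:-c, 1:]" by (simp add: xc_def Fract1)

lemma xc_pow: "xc c ^ n = T (Yp c ^ n)" by (simp add: xc_T to_fract_power)

lemma T_smult: "T [:a:] * T p = T (smult a p)"
  by (simp only: to_fract_mult[symmetric]) simp

lemma xc_nz: "xc c \<noteq> 0" by (simp add: xc_T)

lemma rderiv_T: "rderiv (T p) = T (pderiv p)"
  by (simp add: rderiv_def Fract1)

lemma rderiv_0: "rderiv (0::'a::{field_char_0,field_gcd} ratfun) = 0"
  using rderiv_T[of "0::'a poly"] by simp

lemma rderiv_pow_0: "(rderiv ^^ k) (0::'a::{field_char_0,field_gcd} ratfun) = 0"
  by (induct k) (auto simp: rderiv_0)

lemma wmult_bound:
  fixes A B :: "'a::{field_char_0,field_gcd} wop"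
  assumes "degree A \<le> na" "degree B \<le> nb"
  shows "wmult A B = (\<Sum>i\<le>na. \<Sum>k\<le>i. \<Sum>j\<le>nb.
      monom (coeff A i * of_nat (i choose k) * (rderiv ^^ k) (coeff B j)) (i - k + j))"
proof -
  have inner: "(\<Sum>j\<le>degree B. monom (coeff A i * of_nat (i choose k) * (rderiv ^^ k) (coeff B j)) (i - k + j))
     = (\<Sum>j\<le>nb. monom (coeff A i * of_nat (i choose k) * (rderiv ^^ k) (coeff B j)) (i - k + j))" for i k
    by (rule sum.mono_neutral_left) (use assms in \<open>auto simp: coeff_eq_0 rderiv_pow_0\<close>)
  have "wmult A B = (\<Sum>i\<le>degree A. \<Sum>k\<le>i. \<Sum>j\<le>nb.
      monom (coeff A i * of_nat (i choose k) * (rderiv ^^ k) (coeff B j)) (i - k + j))"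
    unfolding wmult_def inner ..
  also have "\<dots> = (\<Sum>i\<le>na. \<Sum>k\<le>i. \<Sum>j\<le>nb.
      monom (coeff A i * of_nat (i choose k) * (rderiv ^^ k) (coeff B j)) (i - k + j))"
    by (rule sum.mono_neutral_left) (use assms in \<open>auto simp: coeff_eq_0\<close>)
  finally show ?thesis .
qed

lemma wmult_const:
  fixes B :: "'a::{field_char_0,field_gcd} wop"
  shows "wmult [:a:] B = smult a B"
proof -
  have "wmult [:a:] B = (\<Sum>j\<le>degree B. monom (a * coeff B j) j)"
    by (subst wmult_bound[of _ 0 _ "degree B"]) auto
  also have "\<dots> = smult a B"
    by (subst (2) poly_as_sum_of_monoms[symmetric]) (simp add: smult_sum smult_monom)
  finally show ?thesis .
qed


lemma pcompose_pow: "pcompose (p ^ n) q = (pcompose p q) ^ n"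
  by (induct n) (auto simp: pcompose_mult pcompose_1)

lemma X_pow: "[:0, 1:] ^ n = (monom 1 n :: 'a::comm_ring_1 poly)"
  by (induct n) (auto simp: monom_Suc)

lemma Yp_comp: "pcompose (Yp c ^ n) [:c, 1:] = monom 1 n"
  by (simp add: pcompose_pow pcompose_pCons X_pow)

lemma powi_nonneg: "n \<ge> 0 \<Longrightarrow> x powi n = x ^ nat n"
  by (metis nat_0_le power_int_of_nat)

lemma laurent:
  fixes a :: "int \<Rightarrow> 'a::{field_char_0,field_gcd}"
  assumes fin: "finite I" and inj: "inj_on e I"
  shows "(\<Sum>i\<in>I. T [:a i:] * xc c powi (e i)) \<in> range T \<longleftrightarrow> (\<forall>i\<in>I. e i < 0 \<longrightarrow> a i = 0)"
proof
  assume H: "\<forall>i\<in>I. e i < 0 \<longrightarrow> a i = 0"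
  have "(\<Sum>i\<in>I. T [:a i:] * xc c powi (e i)) = (\<Sum>i\<in>I. T (if e i < 0 then 0 else [:a i:] * Yp c ^ nat (e i)))"
  proof (rule sum.cong)
    fix i assume "i \<in> I"
    show "T [:a i:] * xc c powi (e i) = T (if e i < 0 then 0 else [:a i:] * Yp c ^ nat (e i))"
      using H \<open>i \<in> I\<close> by (auto simp: powi_nonneg xc_pow T_smult)
  qed simp
  also have "\<dots> = T (\<Sum>i\<in>I. (if e i < 0 then 0 else [:a i:] * Yp c ^ nat (e i)))"
    by (rule to_fract_sum[symmetric])
  finally have E: "(\<Sum>i\<in>I. T [:a i:] * xc c powi (e i)) = T (\<Sum>i\<in>I. (if e i < 0 then 0 else [:a i:] * Yp c ^ nat (e i)))" .
  show "(\<Sum>i\<in>I. T [:a i:] * xc c powi (e i)) \<in> range T" unfolding E by (rule rangeI)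
next
  assume "(\<Sum>i\<in>I. T [:a i:] * xc c powi (e i)) \<in> range T"
  then obtain Q where Q: "(\<Sum>i\<in>I. T [:a i:] * xc c powi (e i)) = T Q" by auto
  define M where "M = (\<Sum>i\<in>I. nat (- e i))"
  have M: "e i + int M \<ge> 0" if "i \<in> I" for i
  proof -
    have "nat (- e i) \<le> M" unfolding M_def by (rule member_le_sum) (use fin that in auto)
    then show ?thesis by linarith
  qed
  have "T (Q * Yp c ^ M) = (\<Sum>i\<in>I. T [:a i:] * xc c powi (e i)) * xc c ^ M"
    by (simp only: to_fract_mult xc_pow Q)
  also have "\<dots> = (\<Sum>i\<in>I. T [:a i:] * xc c powi (e i + int M))"
    unfolding sum_distrib_right
  proof (rule sum.cong)
    fix i
    have "xc c powi (e i + int M) = xc c powi (e i) * xc c powi (int M)"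
      by (rule power_int_add) (simp add: xc_nz)
    then show "T [:a i:] * xc c powi e i * xc c ^ M = T [:a i:] * xc c powi (e i + int M)"
      by (simp only: power_int_of_nat mult.assoc)
  qed simp
  also have "\<dots> = (\<Sum>i\<in>I. T ([:a i:] * Yp c ^ nat (e i + int M)))"
    by (rule sum.cong) (use M in \<open>auto simp: powi_nonneg xc_pow T_smult\<close>)
  also have "\<dots> = T (\<Sum>i\<in>I. [:a i:] * Yp c ^ nat (e i + int M))"
    by (simp add: to_fract_sum)
  finally have "T (Q * Yp c ^ M) = T (\<Sum>i\<in>I. [:a i:] * Yp c ^ nat (e i + int M))" .
  then have eq: "Q * Yp c ^ M = (\<Sum>i\<in>I. [:a i:] * Yp c ^ nat (e i + int M))"
    by (simp only: to_fract_eq_iff)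
  have eq2: "monom 1 M * pcompose Q [:c, 1:] = (\<Sum>i\<in>I. monom (a i) (nat (e i + int M)))"
  proof -
    have "pcompose (Q * Yp c ^ M) [:c, 1:] = pcompose (\<Sum>i\<in>I. [:a i:] * Yp c ^ nat (e i + int M)) [:c, 1:]"
      using eq by simp
    then show ?thesis
      by (simp add: pcompose_mult pcompose_sum pcompose_smult Yp_comp mult.commute smult_monom)
  qed
  show "\<forall>i\<in>I. e i < 0 \<longrightarrow> a i = 0"
  proof (intro ballI impI)
    fix i0 assume i0: "i0 \<in> I" "e i0 < 0"
    have "coeff (monom 1 M * pcompose Q [:c, 1:]) (nat (e i0 + int M)) = 0"
      using i0 M[OF i0(1)] by (simp add: coeff_monom_mult)
    moreover have "coeff (\<Sum>i\<in>I. monom (a i) (nat (e i + int M))) (nat (e i0 + int M)) = a i0"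
    proof -
      have "coeff (\<Sum>i\<in>I. monom (a i) (nat (e i + int M))) (nat (e i0 + int M))
          = (\<Sum>i\<in>I. if i = i0 then a i else 0)"
        unfolding coeff_sum
      proof (rule sum.cong)
        fix i assume "i \<in> I"
        have "nat (e i + int M) = nat (e i0 + int M) \<longleftrightarrow> i = i0"
        proof
          assume "nat (e i + int M) = nat (e i0 + int M)"
          then have "e i = e i0" using M[OF \<open>i \<in> I\<close>] M[OF i0(1)] by linarith
          then show "i = i0" using inj \<open>i \<in> I\<close> i0(1) by (auto dest: inj_onD)
        qed simp
        then show "coeff (monom (a i) (nat (e i + int M))) (nat (e i0 + int M)) = (if i = i0 then a i else 0)"
          by (auto simp: coeff_monom)
      qed simp
      also have "\<dots> = a i0" using fin i0 by simp
      finally show ?thesis .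
    qed
    ultimately show "a i0 = 0" using eq2 by simp
  qed
qed

lemma theta_monom: "theta c = monom (xc c) 1"
  by (simp add: theta_def wd_def wmult_const smult_monom)

definition diag :: "'a::{field_char_0,field_gcd} \<Rightarrow> nat \<Rightarrow> (nat \<Rightarrow> 'a) \<Rightarrow> 'a wop" where
  "diag c n f = (\<Sum>j\<le>n. monom (T (smult (f j) (Yp c ^ j))) j)"

lemma coeff_diag: "coeff (diag c n f) t = (if t \<le> n then T (smult (f t) (Yp c ^ t)) else 0)"
  by (simp add: diag_def coeff_sum coeff_monom)

lemma degree_diag: "degree (diag c n f) \<le> n"
  by (rule degree_le) (simp add: coeff_diag)

lemma xc_T_smult: "xc c * T (smult a (Yp c ^ j)) = T (smult a (Yp c ^ Suc j))"
  unfolding xc_T to_fract_mult[symmetric] by (simp only: mult_smult_right power_Suc)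

lemma rderiv_term: "xc c * rderiv (T (smult a (Yp c ^ j))) = T (smult (of_nat j * a) (Yp c ^ j))"
proof (cases j)
  case 0 then show ?thesis by (simp add: rderiv_T)
next
  case (Suc n)
  have "pderiv (Yp c ^ Suc n) = smult (of_nat (Suc n)) (Yp c ^ n)"
    by (simp only: pderiv_power_Suc) (simp add: pderiv_pCons)
  then have "pderiv (smult a (Yp c ^ Suc n)) = smult (of_nat (Suc n) * a) (Yp c ^ n)"
    by (simp only: pderiv_smult smult_smult mult.commute)
  then show ?thesis by (simp only: Suc rderiv_T xc_T_smult)
qed

lemma theta_diag:
  fixes f :: "nat \<Rightarrow> 'a::{field_char_0,field_gcd}"
  assumes f0: "\<forall>j>n. f j = 0"
  shows "wmult (theta c) (diag c n f) = diag c (Suc n) (\<lambda>j. of_nat j * f j + (if j = 0 then 0 else f (j - 1)))"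
proof -
  have dA: "degree (theta c) \<le> 1" by (simp add: theta_monom degree_monom_eq xc_nz)
  have "wmult (theta c) (diag c n f) =
     (\<Sum>j\<le>n. monom (xc c * T (smult (f j) (Yp c ^ j))) (Suc j)) +
     (\<Sum>j\<le>n. monom (xc c * rderiv (T (smult (f j) (Yp c ^ j)))) j)"
    by (subst wmult_bound[OF dA degree_diag])
       (simp add: theta_monom coeff_monom coeff_diag numeral_2_eq_2 atMost_Suc sum.distrib)
  also have "\<dots> = (\<Sum>j\<le>n. monom (T (smult (f j) (Yp c ^ Suc j))) (Suc j)) +
     (\<Sum>j\<le>n. monom (T (smult (of_nat j * f j) (Yp c ^ j))) j)"
    by (simp only: xc_T_smult rderiv_term)
  also have "\<dots> = diag c (Suc n) (\<lambda>j. of_nat j * f j + (if j = 0 then 0 else f (j - 1)))"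
  proof (rule poly_eqI)
    fix t
    show "coeff ((\<Sum>j\<le>n. monom (T (smult (f j) (Yp c ^ Suc j))) (Suc j)) +
     (\<Sum>j\<le>n. monom (T (smult (of_nat j * f j) (Yp c ^ j))) j)) t =
      coeff (diag c (Suc n) (\<lambda>j. of_nat j * f j + (if j = 0 then 0 else f (j - 1)))) t"
    proof (cases t)
      case 0 then show ?thesis by (simp add: coeff_sum coeff_monom coeff_diag)
    next
      case (Suc t')
      have "coeff (\<Sum>j\<le>n. monom (T (smult (f j) (Yp c ^ Suc j))) (Suc j)) t
          = (if t' \<le> n then T (smult (f t') (Yp c ^ Suc t')) else 0)"
        using Suc by (simp add: coeff_sum coeff_monom)
      moreover have "coeff (\<Sum>j\<le>n. monom (T (smult (of_nat j * f j) (Yp c ^ j))) j) t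
          = (if t \<le> n then T (smult (of_nat t * f t) (Yp c ^ t)) else 0)"
        by (simp add: coeff_sum coeff_monom)
      ultimately show ?thesis using Suc f0
        by (auto simp: coeff_diag smult_add_left not_le)
    qed
  qed
  finally show ?thesis .
qed

fun phi :: "nat \<Rightarrow> nat \<Rightarrow> 'a::{field_char_0,field_gcd}" where
  "phi 0 j = (if j = 0 then 1 else 0)"
| "phi (Suc k) j = of_nat j * phi k j + (if j = 0 then 0 else phi k (j - 1))"

lemma phi_zero: "j > k \<Longrightarrow> phi k j = 0"
  by (induct k arbitrary: j) auto

lemma wpow_theta: "wpow (theta c) k = diag c k (phi k)"
proof (induct k)
  case 0 then show ?case by (simp add: wpow_def diag_def pCons_one)
next
  case (Suc k)
  have "wpow (theta c) (Suc k) = wmult (theta c) (wpow (theta c) k)"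
    by (simp add: wpow_def)
  also have "\<dots> = diag c (Suc k) (phi (Suc k))"
  proof -
    have e: "phi (Suc k) = (\<lambda>j. of_nat j * phi k j + (if j = 0 then 0 else phi k (j - 1)))"
      by (rule ext) simp
    show ?thesis unfolding Suc e by (rule theta_diag) (auto simp: phi_zero)
  qed
  finally show ?case .
qed

definition bq :: "'a::{field_char_0,field_gcd} poly \<Rightarrow> nat \<Rightarrow> 'a" where
  "bq q j = (\<Sum>k\<le>degree q. coeff q k * phi k j)"

lemma bq_zero: "j > degree q \<Longrightarrow> bq q j = 0"
  by (auto simp: bq_def phi_zero intro!: sum.neutral)

lemma coeff_wpoly: "coeff (wpoly_eval q (theta c)) j = T (smult (bq q j) (Yp c ^ j))"
proof -
  have "coeff (wpoly_eval q (theta c)) j =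
     (\<Sum>k\<le>degree q. T [:coeff q k:] * (if j \<le> k then T (smult (phi k j) (Yp c ^ j)) else 0))"
    by (simp add: wpoly_eval_def wmult_const wpow_theta coeff_sum coeff_diag Fract1)
  also have "\<dots> = (\<Sum>k\<le>degree q. T (smult (coeff q k * phi k j) (Yp c ^ j)))"
    by (rule sum.cong) (auto simp: T_smult phi_zero)
  also have "\<dots> = T (smult (bq q j) (Yp c ^ j))"
    by (simp add: bq_def smult_sum)
  finally show ?thesis .
qed

definition ff :: "nat \<Rightarrow> nat \<Rightarrow> nat" where "ff m j = (\<Prod>i<j. m - i)"

lemma ff_Suc: "ff m (Suc j) = ff m j * (m - j)"
  by (simp add: ff_def)

lemma ff_zero: assumes "j > m" shows "ff m j = 0"
  unfolding ff_def by (rule prod_zero) (use assms in \<open>auto intro!: bexI[of _ m]\<close>)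

lemma ff_nz: "j \<le> m \<Longrightarrow> ff m j \<noteq> 0"
  unfolding ff_def by auto

lemma ff_rec: "j * ff m j + ff m (Suc j) = m * ff m j"
proof (cases "j \<le> m")
  case True
  have "j * ff m j + ff m (Suc j) = (j + (m - j)) * ff m j"
    by (simp only: ff_Suc add_mult_distrib add_mult_distrib2 mult.commute[of _ "ff m j"])
  also have "j + (m - j) = m" using True by simp
  finally show ?thesis .
next
  case False then show ?thesis by (simp add: ff_zero ff_Suc)
qed

lemma phi_sum: "(\<Sum>j\<le>k. phi k j * of_nat (ff m j)) = (of_nat m ^ k :: 'a::{field_char_0,field_gcd})"
proof (induct k)
  case 0 then show ?case by (simp add: ff_def)
next
  case (Suc k)
  have "(\<Sum>j\<le>Suc k. (phi (Suc k) j :: 'a) * of_nat (ff m j))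
     = (\<Sum>j\<le>Suc k. of_nat j * phi k j * of_nat (ff m j))
       + (\<Sum>j\<le>Suc k. (if j = 0 then 0 else phi k (j - 1)) * of_nat (ff m j))"
    unfolding sum.distrib[symmetric] by (rule sum.cong) (simp_all only: phi.simps distrib_right)
  also have "(\<Sum>j\<le>Suc k. of_nat j * phi k j * of_nat (ff m j)) = (\<Sum>j\<le>k. of_nat j * (phi k j :: 'a) * of_nat (ff m j))"
    by (simp only: sum.atMost_Suc phi_zero[of k "Suc k"] lessI mult_zero_right mult_zero_left add_0_right)
  also have "(\<Sum>j\<le>Suc k. (if j = 0 then 0 else phi k (j - 1)) * of_nat (ff m j))
     = (\<Sum>j\<le>k. (phi k j :: 'a) * of_nat (ff m (Suc j)))"
    by (subst sum.atMost_Suc_shift) simp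
  also have "(\<Sum>j\<le>k. of_nat j * (phi k j :: 'a) * of_nat (ff m j)) + (\<Sum>j\<le>k. phi k j * of_nat (ff m (Suc j)))
     = (\<Sum>j\<le>k. phi k j * of_nat (j * ff m j + ff m (Suc j)))"
    unfolding sum.distrib[symmetric]
    by (rule sum.cong) (simp_all only: of_nat_add of_nat_mult distrib_left mult.assoc mult.left_commute)
  also have "\<dots> = (\<Sum>j\<le>k. of_nat m * (phi k j * of_nat (ff m j)))"
  proof (rule sum.cong)
    fix j
    have e: "(of_nat (j * ff m j + ff m (Suc j)) :: 'a) = of_nat m * of_nat (ff m j)"
      by (simp only: ff_rec of_nat_mult)
    show "phi k j * of_nat (j * ff m j + ff m (Suc j)) = of_nat m * (phi k j * (of_nat (ff m j) :: 'a))"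
      by (simp only: e mult.left_commute)
  qed simp
  also have "\<dots> = of_nat m * of_nat m ^ k"
    by (simp only: sum_distrib_left[symmetric] Suc.hyps)
  finally show ?case by (simp only: power_Suc)
qed

lemma poly_bq:
  assumes "degree q \<le> D"
  shows "poly q (of_nat m) = (\<Sum>j\<le>D. bq q j * of_nat (ff m j))"
proof -
  have "(\<Sum>j\<le>D. bq q j * of_nat (ff m j)) = (\<Sum>k\<le>degree q. coeff q k * (\<Sum>j\<le>D. phi k j * of_nat (ff m j)))"
    by (simp add: bq_def sum_distrib_left sum_distrib_right algebra_simps sum.swap[of _ "{..D}"])
  also have "\<dots> = (\<Sum>k\<le>degree q. coeff q k * (\<Sum>j\<le>k. phi k j * of_nat (ff m j)))"
  proof (rule sum.cong)
    fix k assume "k \<in> {..degree q}"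
    then have "k \<le> D" using assms by simp
    then have "(\<Sum>j\<le>D. (phi k j :: 'a) * of_nat (ff m j)) = (\<Sum>j\<le>k. phi k j * of_nat (ff m j))"
      by (intro sum.mono_neutral_right) (auto simp: phi_zero)
    then show "coeff q k * (\<Sum>j\<le>D. phi k j * of_nat (ff m j)) = coeff q k * (\<Sum>j\<le>k. phi k j * of_nat (ff m j))"
      by simp
  qed simp
  also have "\<dots> = poly q (of_nat m)"
    by (simp add: phi_sum poly_altdef)
  finally show ?thesis by simp
qed

lemma bq_vanish:
  fixes q :: "'a::{field_char_0,field_gcd} poly"
  shows "(\<forall>j<n. bq q j = 0) \<longleftrightarrow> (\<forall>m<n. poly q (of_nat m) = 0)"
proof
  assume H: "\<forall>j<n. bq q j = 0"
  show "\<forall>m<n. poly q (of_nat m) = 0"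
  proof (intro allI impI)
    fix m assume "m < n"
    have "poly q (of_nat m) = (\<Sum>j\<le>degree q + m. bq q j * of_nat (ff m j))"
      by (rule poly_bq) simp
    also have "\<dots> = 0"
    proof (rule sum.neutral, intro ballI)
      fix j
      show "bq q j * of_nat (ff m j) = 0"
        using H \<open>m < n\<close> by (cases "j < n") (auto simp: ff_zero)
    qed
    finally show "poly q (of_nat m) = 0" .
  qed
next
  assume H: "\<forall>m<n. poly q (of_nat m) = 0"
  have "j < n \<longrightarrow> bq q j = 0" for j
  proof (induct j rule: less_induct)
    case (less j)
    show ?case
    proof
      assume "j < n"
      have "0 = poly q (of_nat j)" using H \<open>j < n\<close> by simp
      also have "\<dots> = (\<Sum>i\<le>degree q + j. bq q i * of_nat (ff j i))"
        by (rule poly_bq) simp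
      also have "\<dots> = (\<Sum>i\<le>degree q + j. if i = j then bq q j * of_nat (ff j j) else 0)"
      proof (rule sum.cong)
        fix i assume "i \<in> {..degree q + j}"
        show "bq q i * of_nat (ff j i) = (if i = j then bq q j * of_nat (ff j j) else 0)"
          using less \<open>j < n\<close> by (cases i j rule: linorder_cases) (auto simp: ff_zero)
      qed simp
      also have "\<dots> = bq q j * of_nat (ff j j)" by simp
      finally show "bq q j = 0" using ff_nz[of j j] by simp
    qed
  qed
  then show "\<forall>j<n. bq q j = 0" by blast
qed

lemma coeff_main:
  fixes p :: "int \<Rightarrow> 'a::{field_char_0,field_gcd} poly"
  shows "coeff (wmult (xc_powi c (- int s)) (\<Sum>i\<in>I. wmult (xc_powi c i) (wpoly_eval (p i) (theta c)))) j
    = (\<Sum>i\<in>I. T [:bq (p i) j:] * xc c powi (i + int j - int s))"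
proof -
  have "coeff (wmult (xc_powi c (- int s)) (\<Sum>i\<in>I. wmult (xc_powi c i) (wpoly_eval (p i) (theta c)))) j
     = (\<Sum>i\<in>I. xc c powi (- int s) * (xc c powi i * T (smult (bq (p i) j) (Yp c ^ j))))"
    by (simp add: xc_powi_def wmult_const coeff_sum coeff_wpoly sum_distrib_left)
  also have "\<dots> = (\<Sum>i\<in>I. T [:bq (p i) j:] * xc c powi (i + int j - int s))"
  proof (rule sum.cong)
    fix i
    have "xc c powi (i + int j - int s) = xc c powi (- int s) * xc c powi i * xc c powi (int j)"
    proof -
      have "xc c powi (i + int j + - int s) = xc c powi (i + int j) * xc c powi (- int s)"
        by (rule power_int_add) (simp add: xc_nz)
      moreover have "xc c powi (i + int j) = xc c powi i * xc c powi (int j)"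
        by (rule power_int_add) (simp add: xc_nz)
      ultimately show ?thesis by (simp add: algebra_simps)
    qed
    then show "xc c powi (- int s) * (xc c powi i * T (smult (bq (p i) j) (Yp c ^ j))) =
      T [:bq (p i) j:] * xc c powi (i + int j - int s)"
      by (simp add: T_smult[symmetric] xc_pow[symmetric] del: to_fract_mult)
  qed simp
  finally show ?thesis .
qed

theorem mainTheorem2:
  fixes c :: "'a::{alg_closed_field, field_char_0, field_gcd}"
    and P :: "'a wop" and p :: "int \<Rightarrow> 'a poly" and r N :: int and s :: nat
  assumes "in_Wx P" and "P \<noteq> 0"
    and "r \<le> N" and "p r \<noteq> 0" and "\<forall>j>N. p j = 0"
    and "P = (\<Sum>i\<in>{r..N}. wmult (xc_powi c i) (wpoly_eval (p i) (theta c)))"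
    and "s > 0"
  shows "in_Wx (wmult (xc_powi c (- int s)) P) \<longleftrightarrow>
           (r - int s \<ge> 0 \<or>
            (\<forall>k j. 0 \<le> k \<and> k \<le> (int s - r) - 1 \<and> 0 \<le> j \<and> j \<le> (int s - r) - 1 - k
                \<longrightarrow> poly (p (r + k)) (of_int j) = 0))"
proof -
  have rngT: "range (\<lambda>q. Fract q 1) = range T" by (simp add: Fract1)
  have "in_Wx (wmult (xc_powi c (- int s)) P) \<longleftrightarrow>
      (\<forall>j. \<forall>i\<in>{r..N}. i + int j - int s < 0 \<longrightarrow> bq (p i) j = 0)"
  proof -
    have "in_Wx (wmult (xc_powi c (- int s)) P) \<longleftrightarrow>
      (\<forall>j. (\<Sum>i\<in>{r..N}. T [:bq (p i) j:] * xc c powi (i + int j - int s)) \<in> range T)"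
      unfolding in_Wx_def rngT assms(6) coeff_main ..
    also have "\<dots> \<longleftrightarrow> (\<forall>j. \<forall>i\<in>{r..N}. i + int j - int s < 0 \<longrightarrow> bq (p i) j = 0)"
    proof (intro iff_allI)
      fix j
      show "(\<Sum>i\<in>{r..N}. T [:bq (p i) j:] * xc c powi (i + int j - int s)) \<in> range T \<longleftrightarrow>
        (\<forall>i\<in>{r..N}. i + int j - int s < 0 \<longrightarrow> bq (p i) j = 0)"
        using laurent[where e="\<lambda>i. i + int j - int s" and a="\<lambda>i. bq (p i) j" and I="{r..N}" and c=c]
        by (simp add: inj_on_def)
    qed
    finally show ?thesis .
  qed
  also have "\<dots> \<longleftrightarrow> (\<forall>i\<in>{r..N}. \<forall>m<nat (int s - i). poly (p i) (of_nat m) = 0)"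
  proof -
    have "(\<forall>j. \<forall>i\<in>{r..N}. i + int j - int s < 0 \<longrightarrow> bq (p i) j = 0) \<longleftrightarrow>
       (\<forall>i\<in>{r..N}. \<forall>j<nat (int s - i). bq (p i) j = 0)"
    proof -
      have key: "i + int j - int s < 0 \<longleftrightarrow> j < nat (int s - i)" for i j
        unfolding zless_nat_eq_int_zless by linarith
      show ?thesis unfolding key by blast
    qed
    also have "\<dots> \<longleftrightarrow> (\<forall>i\<in>{r..N}. \<forall>m<nat (int s - i). poly (p i) (of_nat m) = 0)"
      by (simp add: bq_vanish)
    finally show ?thesis .
  qed
  also have "\<dots> \<longleftrightarrow> (r - int s \<ge> 0 \<or>
            (\<forall>k j. 0 \<le> k \<and> k \<le> (int s - r) - 1 \<and> 0 \<le> j \<and> j \<le> (int s - r) - 1 - k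
                \<longrightarrow> poly (p (r + k)) (of_int j) = 0))"
  proof
    assume H: "\<forall>i\<in>{r..N}. \<forall>m<nat (int s - i). poly (p i) (of_nat m) = 0"
    show "r - int s \<ge> 0 \<or>
            (\<forall>k j. 0 \<le> k \<and> k \<le> (int s - r) - 1 \<and> 0 \<le> j \<and> j \<le> (int s - r) - 1 - k
                \<longrightarrow> poly (p (r + k)) (of_int j) = 0)"
    proof (rule disjI2, intro allI impI)
      fix k j :: int
      assume kj: "0 \<le> k \<and> k \<le> (int s - r) - 1 \<and> 0 \<le> j \<and> j \<le> (int s - r) - 1 - k"
      show "poly (p (r + k)) (of_int j) = 0"
      proof (cases "r + k > N")
        case True then show ?thesis using assms(5) by simp
      next
        case False
        then have "r + k \<in> {r..N}" using kj by simp
        moreover have "nat j < nat (int s - (r + k))" using kj by linarith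
        ultimately have "poly (p (r + k)) (of_nat (nat j)) = 0" using H by blast
        then show ?thesis using kj by (simp add: of_nat_nat)
      qed
    qed
  next
    assume H: "r - int s \<ge> 0 \<or>
            (\<forall>k j. 0 \<le> k \<and> k \<le> (int s - r) - 1 \<and> 0 \<le> j \<and> j \<le> (int s - r) - 1 - k
                \<longrightarrow> poly (p (r + k)) (of_int j) = 0)"
    show "\<forall>i\<in>{r..N}. \<forall>m<nat (int s - i). poly (p i) (of_nat m) = 0"
    proof (intro ballI allI impI)
      fix i m assume i: "i \<in> {r..N}" and m: "m < nat (int s - i)"
      then have H2: "\<forall>k j. 0 \<le> k \<and> k \<le> (int s - r) - 1 \<and> 0 \<le> j \<and> j \<le> (int s - r) - 1 - k
                \<longrightarrow> poly (p (r + k)) (of_int j) = 0" using H by auto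
      have "poly (p (r + (i - r))) (of_int (int m)) = 0"
        using i m by (intro H2[rule_format]) auto
      then show "poly (p i) (of_nat m) = 0" by simp
    qed
  qed
  finally show ?thesis .
qed

end
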